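(* Let $(P,r,\gamma)$ be a discounted MDP with finite $\mathcal{S},\mathcal{A}$, $r:\mathcal{S}\times\mathcal{A}\to[0,1]$, $\gamma\in(0,1)$, and let $M>0$, $\varepsilon>0$. Define $\mathcal{L}=\mathrm{Clip}_M\circ\mathcal{T}_\gamma$ and run the Span-Constrained Planning algorithm: $V^0=\mathbf 0$, $T=\big\lceil \log(\frac{3}{(1-\gamma)^2\varepsilon})/(1-\gamma)\big\rceil$, $V^{t+1}=\mathcal{L}(V^t)$ for $t=0,\dots,T-1$; choose $\widehat\pi(s)\in\arg\max_a r(s,a)+\gamma P_{sa}V^T$; set $m=\min_sV^T(s)$ and $\tilde r(s,a)=\min\{m+M-\gamma P_{sa}V^T,\ r(s,a)\}$; return $\widehat\pi,V^T,\tilde r$. Then $\mathcal{L}$ is a $\gamma$-contraction in $\|\cdot\|_\infty$ with a unique fixed point $V^\star_{\gamma,M}$, and: 1. $\|V^T-V^\star_{\gamma,M}\|_\infty\le\varepsilon$; 2. $\tilde r\le r$, $\|V^{\widehat\pi}_{\gamma,\tilde r}-V^\star_{\gamma,M}\|_\infty\le\varepsilon$, and $\|V^{\widehat\pi}_{\gamma,\tilde r}\|_{\mathrm{sp}}\le M+2\varepsilon$; 3. for any policy $\pi'$ and reward function $r'\le r$ with $\|V^{\pi'}_{\gamma,r'}\|_{\mathrm{sp}}\le M$, we have $V^\star_{\gamma,M}\ge V^{\pi'}_{\gamma,r'}$ and $V^{\widehat\pi}_\gamma\ge V^{\widehat\pi}_{\gamma,\tilde r}\ge V^\star_{\gamma,M}-\varepsilon\mathbf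 1\ge V^{\pi'}_{\gamma,r'}-\varepsilon\mathbf 1$.
   Context: $\mathcal{T}_\gamma(V)(s)=\max_a\big(r(s,a)+\gamma\sum_{s'}P(s'\mid s,a)V(s')\big)$; $P_{sa}V=\sum_{s'}P(s'\mid s,a)V(s')$. $\mathrm{Clip}_M(V)=\min\{V,(M+\min_{s'}V(s'))\mathbf 1\}$ (elementwise minimum). $V^\pi_{\gamma,r'}(s)=\mathbb{E}^\pi_s[\sum_{t\ge0}\gamma^tr'(S_t,A_t)]$ is the value of $\pi$ in the DMDP $(P,r',\gamma)$ and $V^\pi_\gamma=V^\pi_{\gamma,r}$. $\|x\|_{\mathrm{sp}}=\max_sx(s)-\min_sx(s)$. Inequalities between vectors/functions are elementwise. *)

theory Defs
  imports Complex_Main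
begin

text \<open>Transition kernel P s a s' = probability of moving to s' from s under action a.\<close>

definition stochastic_kernel :: "('s::finite \<Rightarrow> 'a::finite \<Rightarrow> 's \<Rightarrow> real) \<Rightarrow> bool" where
  "stochastic_kernel P \<longleftrightarrow> (\<forall>s a s'. 0 \<le> P s a s') \<and> (\<forall>s a. (\<Sum>s'\<in>UNIV. P s a s') = 1)"

text \<open>A (stationary, possibly randomized) policy: pol s a = probability of action a in state s.\<close>
definition is_policy :: "('s::finite \<Rightarrow> 'a::finite \<Rightarrow> real) \<Rightarrow> bool" where
  "is_policy pol \<longleftrightarrow> (\<forall>s a. 0 \<le> pol s a) \<and> (\<forall>s. (\<Sum>a\<in>UNIV. pol s a) = 1)"

definition det_policy :: "('s \<Rightarrow> 'a) \<Rightarrow> 's \<Rightarrow> 'a \<Rightarrow> real" where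
  "det_policy d s a = (if a = d s then 1 else 0)"

definition Pv :: "('s::finite \<Rightarrow> 'a \<Rightarrow> 's \<Rightarrow> real) \<Rightarrow> 's \<Rightarrow> 'a \<Rightarrow> ('s \<Rightarrow> real) \<Rightarrow> real" where
  "Pv P s a V = (\<Sum>s'\<in>UNIV. P s a s' * V s')"

text \<open>exp_reward P pol r t s = E^pi_s [ r(S_t, A_t) ].\<close>
fun exp_reward :: "('s::finite \<Rightarrow> 'a::finite \<Rightarrow> 's \<Rightarrow> real) \<Rightarrow> ('s \<Rightarrow> 'a \<Rightarrow> real) \<Rightarrow> ('s \<Rightarrow> 'a \<Rightarrow> real) \<Rightarrow> nat \<Rightarrow> 's \<Rightarrow> real" where
  "exp_reward P pol r 0 s = (\<Sum>a\<in>UNIV. pol s a * r s a)"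
| "exp_reward P pol r (Suc t) s = (\<Sum>a\<in>UNIV. pol s a * (\<Sum>s'\<in>UNIV. P s a s' * exp_reward P pol r t s'))"

definition policy_value :: "('s::finite \<Rightarrow> 'a::finite \<Rightarrow> 's \<Rightarrow> real) \<Rightarrow> real \<Rightarrow> ('s \<Rightarrow> 'a \<Rightarrow> real) \<Rightarrow> ('s \<Rightarrow> 'a \<Rightarrow> real) \<Rightarrow> 's \<Rightarrow> real" where
  "policy_value P \<gamma> r pol s = (\<Sum>t. \<gamma> ^ t * exp_reward P pol r t s)"

definition bellman :: "('s::finite \<Rightarrow> 'a::finite \<Rightarrow> 's \<Rightarrow> real) \<Rightarrow> ('s \<Rightarrow> 'a \<Rightarrow> real) \<Rightarrow> real \<Rightarrow> ('s \<Rightarrow> real) \<Rightarrow> 's \<Rightarrow> real" where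
  "bellman P r \<gamma> V s = Max (range (\<lambda>a. r s a + \<gamma> * Pv P s a V))"

definition clip :: "real \<Rightarrow> ('s::finite \<Rightarrow> real) \<Rightarrow> 's \<Rightarrow> real" where
  "clip M V s = min (V s) (M + Min (range V))"

definition sup_norm :: "('s::finite \<Rightarrow> real) \<Rightarrow> real" where
  "sup_norm V = Max (range (\<lambda>s. \<bar>V s\<bar>))"

definition sp_norm :: "('s::finite \<Rightarrow> real) \<Rightarrow> real" where
  "sp_norm V = Max (range V) - Min (range V)"

end

theory Submission
  imports Defs
begin

lemma sup_norm_ge: "\<bar>V s\<bar> \<le> sup_norm (V::'s::finite \<Rightarrow> real)"
  unfolding sup_norm_def by (rule Max_ge) auto

lemma sup_norm_le: "(\<And>s. \<bar>V s\<bar> \<le> c) \<Longrightarrow> sup_norm (V::'s::finite \<Rightarrow> real) \<le> c"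
  unfolding sup_norm_def by (subst Max_le_iff) auto

lemma sup_norm_nonneg: "0 \<le> sup_norm (V::'s::finite \<Rightarrow> real)"
  using sup_norm_ge[of V] abs_ge_zero order_trans by blast

lemma sup_norm_sym: "sup_norm (V - W) = sup_norm (W - (V::'s::finite \<Rightarrow> real))"
  by (simp add: sup_norm_def abs_minus_commute)

lemma sup_norm_0: "sup_norm (V - (\<lambda>_. 0)) = sup_norm (V::'s::finite \<Rightarrow> real)"
  by (simp add: fun_diff_def)

lemma sup_norm_0': "sup_norm ((\<lambda>_. 0) - V) = sup_norm (V::'s::finite \<Rightarrow> real)"
  using sup_norm_sym sup_norm_0 by metis

lemma sup_norm_pt: "\<bar>V s - W s\<bar> \<le> sup_norm (V - (W::'s::finite \<Rightarrow> real))"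
  using sup_norm_ge[of "V - W" s] by simp

lemma sup_norm_tri: "sup_norm (U - W) \<le> sup_norm (U - V) + sup_norm (V - (W::'s::finite \<Rightarrow> real))"
proof (rule sup_norm_le)
  fix s
  have "\<bar>(U - W) s\<bar> \<le> \<bar>U s - V s\<bar> + \<bar>V s - W s\<bar>" by simp
  then show "\<bar>(U - W) s\<bar> \<le> sup_norm (U - V) + sup_norm (V - W)"
    using sup_norm_pt[of U s V] sup_norm_pt[of V s W] by linarith
qed

lemma Pv_diff:
  assumes "stochastic_kernel P"
  shows "\<bar>Pv P s a V - Pv P s a W\<bar> \<le> sup_norm (V - W)"
proof -
  have "\<bar>Pv P s a V - Pv P s a W\<bar> = \<bar>\<Sum>s'\<in>UNIV. P s a s' * (V s' - W s')\<bar>"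
    by (simp add: Pv_def sum_subtractf algebra_simps)
  also have "\<dots> \<le> (\<Sum>s'\<in>UNIV. P s a s' * sup_norm (V - W))"
    apply (rule order_trans[OF sum_abs]) apply (rule sum_mono)
    using assms sup_norm_pt[of V _ W] by (auto simp: stochastic_kernel_def abs_mult intro!: mult_left_mono)
  also have "\<dots> = sup_norm (V - W)" using assms
    by (simp add: stochastic_kernel_def sum_distrib_right[symmetric])
  finally show ?thesis .
qed

lemma Pv_mono:
  assumes "stochastic_kernel P" "\<And>s. V s \<le> W s"
  shows "Pv P s a V \<le> Pv P s a W"
  unfolding Pv_def using assms by (auto simp: stochastic_kernel_def intro!: sum_mono mult_left_mono)

lemma Pv_shift:
  assumes "stochastic_kernel P"
  shows "Pv P s a (\<lambda>s. V s + c) = Pv P s a V + c"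
proof -
  have "Pv P s a (\<lambda>s. V s + c) = Pv P s a V + (\<Sum>s'\<in>UNIV. P s a s') * c"
    by (simp add: Pv_def ring_distribs sum.distrib sum_distrib_right)
  then show ?thesis using assms by (simp add: stochastic_kernel_def)
qed

lemma Pv_zero: "Pv P s a (\<lambda>_. 0) = 0" by (simp add: Pv_def)

lemma bellman_ge: "r s a + \<gamma> * Pv P s a V \<le> bellman P r \<gamma> V s"
  unfolding bellman_def by (rule Max_ge) auto

lemma bellman_ex: "\<exists>a. bellman P r \<gamma> V s = r s a + \<gamma> * Pv P s a V"
proof -
  have "Max (range (\<lambda>a. r s a + \<gamma> * Pv P s a V)) \<in> range (\<lambda>a. r s a + \<gamma> * Pv P s a V)"
    by (rule Max_in) auto
  then show ?thesis unfolding bellman_def by (metis (no_types, lifting) imageE)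
qed

lemma bellman_le1:
  assumes "stochastic_kernel P" "\<gamma> \<ge> 0"
  shows "bellman P r \<gamma> V s \<le> bellman P r \<gamma> W s + \<gamma> * sup_norm (V - W)"
proof -
  obtain a where a: "bellman P r \<gamma> V s = r s a + \<gamma> * Pv P s a V" using bellman_ex by metis
  have "Pv P s a V \<le> Pv P s a W + sup_norm (V - W)" using Pv_diff[OF assms(1), of s a V W] by linarith
  then have "\<gamma> * Pv P s a V \<le> \<gamma> * Pv P s a W + \<gamma> * sup_norm (V - W)"
  proof -
    have "\<gamma> * Pv P s a V \<le> \<gamma> * (Pv P s a W + sup_norm (V - W))"
      using \<open>Pv P s a V \<le> Pv P s a W + sup_norm (V - W)\<close> assms(2) by (rule mult_left_mono)
    then show ?thesis by (simp add: distrib_left)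
  qed
  then show ?thesis using a bellman_ge[of r s a \<gamma> P W] by linarith
qed

lemma bellman_diff:
  assumes "stochastic_kernel P" "\<gamma> \<ge> 0"
  shows "\<bar>bellman P r \<gamma> V s - bellman P r \<gamma> W s\<bar> \<le> \<gamma> * sup_norm (V - W)"
proof -
  have 1: "bellman P r \<gamma> W s \<le> bellman P r \<gamma> V s + \<gamma> * sup_norm (V - W)"
    using bellman_le1[OF assms, of r W s V] sup_norm_sym[of W V] by simp
  show ?thesis using bellman_le1[OF assms, of r V s W] 1 unfolding abs_diff_le_iff by linarith
qed

lemma bellman_mono:
  assumes "stochastic_kernel P" "\<gamma> \<ge> 0" "\<And>s. V s \<le> W s"
  shows "bellman P r \<gamma> V s \<le> bellman P r \<gamma> W s"
proof -
  obtain a where a: "bellman P r \<gamma> V s = r s a + \<gamma> * Pv P s a V" using bellman_ex by metis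
  have "\<gamma> * Pv P s a V \<le> \<gamma> * Pv P s a W" using Pv_mono[OF assms(1,3)] assms(2) by (rule mult_left_mono)
  then show ?thesis using a bellman_ge[of r s a \<gamma> P W] by linarith
qed

lemma bellman_shift:
  assumes "stochastic_kernel P"
  shows "bellman P r \<gamma> (\<lambda>s. V s + c) s = bellman P r \<gamma> V s + \<gamma> * c"
proof (rule antisym)
  obtain a where a: "bellman P r \<gamma> (\<lambda>s. V s + c) s = r s a + \<gamma> * Pv P s a (\<lambda>s. V s + c)" using bellman_ex by metis
  then show "bellman P r \<gamma> (\<lambda>s. V s + c) s \<le> bellman P r \<gamma> V s + \<gamma> * c"
    using bellman_ge[of r s a \<gamma> P V] Pv_shift[OF assms] by (simp add: algebra_simps)
next
  obtain a where a: "bellman P r \<gamma> V s = r s a + \<gamma> * Pv P s a V" using bellman_ex by metis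
  then show "bellman P r \<gamma> V s + \<gamma> * c \<le> bellman P r \<gamma> (\<lambda>s. V s + c) s"
    using bellman_ge[of r s a \<gamma> P "\<lambda>s. V s + c"] Pv_shift[OF assms] by (simp add: algebra_simps)
qed

lemma Min_le': "Min (range (V::'s::finite \<Rightarrow> real)) \<le> V s"
  by (rule Min_le) auto

lemma Min_ex: "\<exists>s. Min (range (V::'s::finite \<Rightarrow> real)) = V s"
proof -
  have "Min (range V) \<in> range V" by (rule Min_in) auto
  then show ?thesis by (metis imageE)
qed

lemma Max_ge': "V s \<le> Max (range (V::'s::finite \<Rightarrow> real))"
  by (rule Max_ge) auto

lemma Max_ex: "\<exists>s. Max (range (V::'s::finite \<Rightarrow> real)) = V s"
proof -
  have "Max (range V) \<in> range V" by (rule Max_in) auto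
  then show ?thesis by (metis imageE)
qed

lemma Min_le_diff: "Min (range W) \<le> Min (range V) + sup_norm (V - (W::'s::finite \<Rightarrow> real))"
proof -
  obtain s where s: "Min (range V) = V s" using Min_ex by metis
  show ?thesis using s Min_le'[of W s] sup_norm_pt[of V s W] by linarith
qed

lemma Min_diff: "\<bar>Min (range V) - Min (range W)\<bar> \<le> sup_norm (V - (W::'s::finite \<Rightarrow> real))"
  using Min_le_diff[of V W] Min_le_diff[of W V] sup_norm_sym[of V W] by linarith

lemma Min_shift: "Min (range (\<lambda>s. V s + c)) = Min (range (V::'s::finite \<Rightarrow> real)) + c"
proof (rule antisym)
  obtain s where s: "Min (range V) = V s" using Min_ex by metis
  show "Min (range (\<lambda>s. V s + c)) \<le> Min (range V) + c" using s Min_le'[of "\<lambda>s. V s + c" s] by simp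
next
  obtain s where s: "Min (range (\<lambda>s. V s + c)) = V s + c" using Min_ex[of "\<lambda>s. V s + c"] by metis
  show "Min (range V) + c \<le> Min (range (\<lambda>s. V s + c))" using s Min_le'[of V s] by simp
qed

lemma clip_diff: "\<bar>clip M V s - clip M W s\<bar> \<le> sup_norm (V - (W::'s::finite \<Rightarrow> real))"
  using Min_diff[of V W] sup_norm_pt[of V s W] unfolding clip_def by linarith

lemma clip_mono: "(\<And>s. V s \<le> W s) \<Longrightarrow> clip M V s \<le> clip M (W::'s::finite \<Rightarrow> real) s"
proof -
  assume h: "\<And>s. V s \<le> W s"
  obtain t where t: "Min (range W) = W t" using Min_ex by metis
  have "Min (range V) \<le> Min (range W)" using t h[of t] Min_le'[of V t] by linarith
  then show ?thesis using h[of s] unfolding clip_def by linarith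
qed

lemma clip_shift: "clip M (\<lambda>s. V s + c) s = clip M (V::'s::finite \<Rightarrow> real) s + c"
  unfolding clip_def Min_shift by simp

lemma Min_clip: "M \<ge> 0 \<Longrightarrow> Min (range (clip M V)) = Min (range (V::'s::finite \<Rightarrow> real))"
proof (rule antisym)
  assume "M \<ge> 0"
  obtain s where s: "Min (range V) = V s" using Min_ex by metis
  have "clip M V s = V s" using s \<open>M \<ge> 0\<close> unfolding clip_def by simp
  then show "Min (range (clip M V)) \<le> Min (range V)" using s Min_le'[of "clip M V" s] by simp
next
  assume "M \<ge> 0"
  obtain s where s: "Min (range (clip M V)) = clip M V s" using Min_ex by metis
  have "Min (range V) \<le> clip M V s" unfolding clip_def
    by (rule min.boundedI) (use Min_le'[of V s] \<open>M \<ge> 0\<close> in auto)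
  then show "Min (range V) \<le> Min (range (clip M V))" using s by simp
qed

lemma clip_le: "clip M V s \<le> M + Min (range V)"
  unfolding clip_def by simp

lemma clip_id: "(\<And>s. V s \<le> M + Min (range V)) \<Longrightarrow> clip M V = V"
  unfolding clip_def by (auto simp: fun_eq_iff)


lemma finite_bound: "\<exists>B. \<forall>s a. \<bar>(r::'s::finite \<Rightarrow> 'a::finite \<Rightarrow> real) s a\<bar> \<le> B"
proof -
  have "\<bar>r s a\<bar> \<le> (\<Sum>s\<in>UNIV. \<Sum>a\<in>UNIV. \<bar>r s a\<bar>)" for s a
  proof -
    have "\<bar>r s a\<bar> \<le> (\<Sum>a\<in>UNIV. \<bar>r s a\<bar>)" by (rule member_le_sum) auto
    also have "\<dots> \<le> (\<Sum>s\<in>UNIV. \<Sum>a\<in>UNIV. \<bar>r s a\<bar>)"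
      by (rule member_le_sum[of s UNIV "\<lambda>s. \<Sum>a\<in>UNIV. \<bar>r s a\<bar>"]) (auto intro: sum_nonneg)
    finally show ?thesis .
  qed
  then show ?thesis by blast
qed

lemma avg_bound:
  fixes w f :: "'a::finite \<Rightarrow> real"
  assumes w0: "\<And>a. 0 \<le> w a" and w1: "(\<Sum>a\<in>UNIV. w a) = 1" and fB: "\<And>a. \<bar>f a\<bar> \<le> B"
  shows "\<bar>\<Sum>a\<in>UNIV. w a * f a\<bar> \<le> B"
proof -
  have "\<bar>\<Sum>a\<in>UNIV. w a * f a\<bar> \<le> (\<Sum>a\<in>UNIV. \<bar>w a * f a\<bar>)" by (rule sum_abs)
  also have "\<dots> \<le> (\<Sum>a\<in>UNIV. w a * B)"
  proof (rule sum_mono)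
    fix a
    have "\<bar>w a * f a\<bar> = w a * \<bar>f a\<bar>" using w0[of a] by (simp add: abs_mult)
    also have "\<dots> \<le> w a * B" using fB[of a] w0[of a] by (rule mult_left_mono)
    finally show "\<bar>w a * f a\<bar> \<le> w a * B" .
  qed
  also have "\<dots> = (\<Sum>a\<in>UNIV. w a) * B" by (rule sum_distrib_right[symmetric])
  also have "\<dots> = B" using w1 by simp
  finally show ?thesis .
qed

lemma ER_bound:
  assumes P: "stochastic_kernel P" and pol: "is_policy pol" and B: "\<forall>s a. \<bar>r s a\<bar> \<le> B"
  shows "\<bar>exp_reward P pol r t s\<bar> \<le> B"
proof (induction t arbitrary: s)
  case 0
  show ?case unfolding exp_reward.simps
    by (rule avg_bound) (use pol B in \<open>auto simp: is_policy_def\<close>)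
next
  case (Suc t)
  have inner: "\<bar>\<Sum>s'\<in>UNIV. P s a s' * exp_reward P pol r t s'\<bar> \<le> B" for a
    by (rule avg_bound) (use P Suc in \<open>auto simp: stochastic_kernel_def\<close>)
  show ?case unfolding exp_reward.simps
    by (rule avg_bound) (use pol inner in \<open>auto simp: is_policy_def\<close>)
qed

lemma PV_summable:
  assumes P: "stochastic_kernel P" and pol: "is_policy pol" and g: "0 \<le> \<gamma>" "\<gamma> < 1"
  shows "summable (\<lambda>t. \<gamma> ^ t * exp_reward P pol r t s)"
proof -
  obtain B where B: "\<forall>s a. \<bar>r s a\<bar> \<le> B" using finite_bound by blast
  show ?thesis
  proof (rule summable_comparison_test)
    have "norm (\<gamma> ^ n * exp_reward P pol r n s) \<le> B * \<gamma> ^ n" for n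
      using mult_left_mono[OF ER_bound[OF P pol B, of n s], of "\<gamma>^n"] g by (simp add: abs_mult mult.commute)
    then show "\<exists>N. \<forall>n\<ge>N. norm (\<gamma> ^ n * exp_reward P pol r n s) \<le> B * \<gamma> ^ n" by blast
    show "summable (\<lambda>n. B * \<gamma> ^ n)" using g by (intro summable_mult summable_geometric) auto
  qed
qed

lemma ER_mono:
  assumes P: "stochastic_kernel P" and pol: "is_policy pol" and le: "\<forall>s a. r1 s a \<le> r2 s a"
  shows "exp_reward P pol r1 t s \<le> exp_reward P pol r2 t s"
proof (induction t arbitrary: s)
  case 0 then show ?case using pol le by (auto simp: is_policy_def intro!: sum_mono mult_left_mono)
next
  case (Suc t)
  have "(\<Sum>s'\<in>UNIV. P s a s' * exp_reward P pol r1 t s') \<le> (\<Sum>s'\<in>UNIV. P s a s' * exp_reward P pol r2 t s')" for a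
    using P Suc by (auto simp: stochastic_kernel_def intro!: sum_mono mult_left_mono)
  then have "pol s a * (\<Sum>s'\<in>UNIV. P s a s' * exp_reward P pol r1 t s') \<le> pol s a * (\<Sum>s'\<in>UNIV. P s a s' * exp_reward P pol r2 t s')" for a
    using pol by (simp add: is_policy_def mult_left_mono)
  then show ?case by (simp add: sum_mono)
qed

lemma PV_mono:
  assumes P: "stochastic_kernel P" and pol: "is_policy pol" and g: "0 \<le> \<gamma>" "\<gamma> < 1"
    and le: "\<forall>s a. r1 s a \<le> r2 s a"
  shows "policy_value P \<gamma> r1 pol s \<le> policy_value P \<gamma> r2 pol s"
  unfolding policy_value_def
  apply (rule suminf_le)
  using ER_mono[OF P pol le] g PV_summable[OF P pol g] by (auto intro!: mult_left_mono)

lemma PV_eq: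
  assumes P: "stochastic_kernel P" and pol: "is_policy pol" and g: "0 \<le> \<gamma>" "\<gamma> < 1"
  shows "policy_value P \<gamma> r pol s =
     (\<Sum>a\<in>UNIV. pol s a * (r s a + \<gamma> * Pv P s a (policy_value P \<gamma> r pol)))"
proof -
  let ?e = "exp_reward P pol r"
  let ?f = "\<lambda>t. \<gamma> ^ t * ?e t s"
  have sf: "summable ?f" by (rule PV_summable[OF P pol g])
  have "policy_value P \<gamma> r pol s = ?f 0 + (\<Sum>t. ?f (Suc t))"
    unfolding policy_value_def using suminf_split_head[OF sf] by simp
  also have "(\<Sum>t. ?f (Suc t)) = (\<Sum>t. \<Sum>a\<in>UNIV. \<Sum>s'\<in>UNIV. \<gamma> * pol s a * P s a s' * (\<gamma> ^ t * ?e t s'))"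
  proof (rule arg_cong[where f=suminf], rule ext)
    fix t
    have "?f (Suc t) = (\<Sum>a\<in>UNIV. \<Sum>s'\<in>UNIV. \<gamma> ^ Suc t * (pol s a * (P s a s' * ?e t s')))"
      by (simp only: exp_reward.simps sum_distrib_left)
    also have "\<dots> = (\<Sum>a\<in>UNIV. \<Sum>s'\<in>UNIV. \<gamma> * pol s a * P s a s' * (\<gamma> ^ t * ?e t s'))"
      by (intro sum.cong refl) (simp only: power_Suc mult_ac)
    finally show "?f (Suc t) = (\<Sum>a\<in>UNIV. \<Sum>s'\<in>UNIV. \<gamma> * pol s a * P s a s' * (\<gamma> ^ t * ?e t s'))" .
  qed
  also have "\<dots> = (\<Sum>a\<in>UNIV. \<Sum>t. \<Sum>s'\<in>UNIV. \<gamma> * pol s a * P s a s' * (\<gamma> ^ t * ?e t s'))"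
    apply (rule suminf_sum)
    apply (rule summable_sum)
    apply (rule summable_mult)
    apply (rule PV_summable[OF P pol g])
    done
  also have "\<dots> = (\<Sum>a\<in>UNIV. \<Sum>s'\<in>UNIV. \<Sum>t. \<gamma> * pol s a * P s a s' * (\<gamma> ^ t * ?e t s'))"
    apply (rule sum.cong[OF refl])
    apply (rule suminf_sum)
    apply (rule summable_mult)
    apply (rule PV_summable[OF P pol g])
    done
  also have "\<dots> = (\<Sum>a\<in>UNIV. \<Sum>s'\<in>UNIV. \<gamma> * pol s a * P s a s' * policy_value P \<gamma> r pol s')"
    unfolding policy_value_def
    apply (rule sum.cong[OF refl])+
    apply (rule suminf_mult)
    apply (rule PV_summable[OF P pol g])
    done
  finally have 1: "policy_value P \<gamma> r pol s = ?f 0 + (\<Sum>a\<in>UNIV. \<Sum>s'\<in>UNIV. \<gamma> * pol s a * P s a s' * policy_value P \<gamma> r pol s')" .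
  have 2: "pol s a * (r s a + \<gamma> * Pv P s a (policy_value P \<gamma> r pol)) =
        pol s a * r s a + (\<Sum>s'\<in>UNIV. \<gamma> * pol s a * P s a s' * policy_value P \<gamma> r pol s')" for a
  proof -
    have "pol s a * (r s a + \<gamma> * Pv P s a (policy_value P \<gamma> r pol)) =
        pol s a * r s a + (\<Sum>s'\<in>UNIV. pol s a * (\<gamma> * (P s a s' * policy_value P \<gamma> r pol s')))"
      by (simp only: Pv_def distrib_left sum_distrib_left)
    also have "\<dots> = pol s a * r s a + (\<Sum>s'\<in>UNIV. \<gamma> * pol s a * P s a s' * policy_value P \<gamma> r pol s')"
      by (intro arg_cong[where f="\<lambda>x. pol s a * r s a + x"] sum.cong refl) (simp only: mult_ac)
    finally show ?thesis .
  qed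
  have 3: "?f 0 = (\<Sum>a\<in>UNIV. pol s a * r s a)" by simp
  show ?thesis unfolding 1 3 2 sum.distrib ..
qed

lemma det_sum: "(\<Sum>a\<in>UNIV. det_policy (d::'s \<Rightarrow> 'a::finite) s a * f a) = f (d s)"
proof -
  have "(\<Sum>a\<in>UNIV. det_policy d s a * f a) = (\<Sum>a\<in>UNIV. if a = d s then f a else 0)"
    by (rule sum.cong) (auto simp: det_policy_def)
  also have "\<dots> = f (d s)" using sum.delta[of UNIV "d s" f] by simp
  finally show ?thesis .
qed

lemma det_is_policy: "is_policy (det_policy d)"
  by (simp add: is_policy_def det_policy_def)


lemma gamma_pow_bound:
  fixes \<gamma> \<epsilon> :: real
  assumes g: "0 < \<gamma>" "\<gamma> < 1" and e: "\<epsilon> > 0"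
    and T: "T = nat \<lceil>ln (3 / ((1 - \<gamma>)^2 * \<epsilon>)) / (1 - \<gamma>)\<rceil>"
  shows "\<gamma> ^ T \<le> (1 - \<gamma>)^2 * \<epsilon> / 3"
proof -
  define q where "q = 3 / ((1 - \<gamma>)^2 * \<epsilon>)"
  have q: "q > 0" using g e by (simp add: q_def)
  have "ln q / (1 - \<gamma>) \<le> real T" using T real_nat_ceiling_ge unfolding q_def by blast
  then have lq: "ln q \<le> real T * (1 - \<gamma>)" using g by (simp add: pos_divide_le_eq)
  have "real T * ln \<gamma> \<le> real T * (\<gamma> - 1)"
    using ln_le_minus_one[OF g(1)] by (intro mult_left_mono) auto
  then have le: "real T * ln \<gamma> \<le> - ln q" using lq by (simp add: algebra_simps)
  have "\<gamma> ^ T = exp (real T * ln \<gamma>)" using powr_realpow[of \<gamma> T] g by (simp add: powr_def)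
  also have "\<dots> \<le> exp (- ln q)" using le by simp
  also have "\<dots> = inverse q" using q by (simp add: exp_minus)
  also have "\<dots> = (1 - \<gamma>)^2 * \<epsilon> / 3" by (simp add: q_def)
  finally show ?thesis .
qed

lemma min_lip: "\<bar>min a b - min a c\<bar> \<le> \<bar>b - (c::real)\<bar>"
  by (auto simp: min_def abs_if)

lemma bellman_norm:
  assumes "stochastic_kernel P" "\<gamma> \<ge> 0"
  shows "sup_norm (bellman P r \<gamma> V - bellman P r \<gamma> W) \<le> \<gamma> * sup_norm (V - W)"
  by (rule sup_norm_le) (simp add: bellman_diff[OF assms])

lemma le_by_pow:
  fixes d K \<gamma> :: real
  assumes "0 \<le> \<gamma>" "\<gamma> < 1" "K > 0" "\<And>n. d \<le> K * \<gamma> ^ n"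
  shows "d \<le> 0"
proof (rule ccontr)
  assume "\<not> d \<le> 0"
  then have "d / K > 0" using assms by simp
  then obtain n where n: "\<gamma> ^ n < d / K" using real_arch_pow_inv assms by blast
  then have "K * \<gamma> ^ n < d" using assms by (simp add: pos_less_divide_eq mult.commute)
  then show False using assms(4)[of n] by simp
qed

theorem lemma3:
  fixes P :: "'s::finite \<Rightarrow> 'a::finite \<Rightarrow> 's \<Rightarrow> real"
    and r :: "'s \<Rightarrow> 'a \<Rightarrow> real"
    and \<gamma> M \<epsilon> :: real
    and T :: nat
    and VT :: "'s \<Rightarrow> real"
    and \<pi>hat :: "'s \<Rightarrow> 'a"
    and m :: real
    and rt :: "'s \<Rightarrow> 'a \<Rightarrow> real"
  assumes P: "stochastic_kernel P"
    and r_range: "\<forall>s a. 0 \<le> r s a \<and> r s a \<le> 1"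
    and \<gamma>: "0 < \<gamma>" "\<gamma> < 1"
    and M: "M > 0"
    and \<epsilon>: "\<epsilon> > 0"
    and T_def: "T = nat \<lceil>ln (3 / ((1 - \<gamma>)^2 * \<epsilon>)) / (1 - \<gamma>)\<rceil>"
    and VT_def: "VT = ((clip M \<circ> bellman P r \<gamma>) ^^ T) (\<lambda>_. 0)"
    and \<pi>hat: "\<forall>s a. r s a + \<gamma> * Pv P s a VT \<le> r s (\<pi>hat s) + \<gamma> * Pv P s (\<pi>hat s) VT"
    and m_def: "m = Min (range VT)"
    and rt_def: "rt = (\<lambda>s a. min (m + M - \<gamma> * Pv P s a VT) (r s a))"
  shows "(\<forall>V W. sup_norm (clip M (bellman P r \<gamma> V) - clip M (bellman P r \<gamma> W))
                  \<le> \<gamma> * sup_norm (V - W))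
       \<and> (\<exists>!V. clip M (bellman P r \<gamma> V) = V)
       \<and> (\<forall>Vstar. clip M (bellman P r \<gamma> Vstar) = Vstar \<longrightarrow>
            sup_norm (VT - Vstar) \<le> \<epsilon>
          \<and> (\<forall>s a. rt s a \<le> r s a)
          \<and> sup_norm (policy_value P \<gamma> rt (det_policy \<pi>hat) - Vstar) \<le> \<epsilon>
          \<and> sp_norm (policy_value P \<gamma> rt (det_policy \<pi>hat)) \<le> M + 2 * \<epsilon>
          \<and> (\<forall>\<pi>' r'. is_policy \<pi>' \<longrightarrow> (\<forall>s a. r' s a \<le> r s a)
                \<longrightarrow> sp_norm (policy_value P \<gamma> r' \<pi>') \<le> M \<longrightarrow>
                (\<forall>s. Vstar s \<ge> policy_value P \<gamma> r' \<pi>' s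
                   \<and> policy_value P \<gamma> r (det_policy \<pi>hat) s \<ge> policy_value P \<gamma> rt (det_policy \<pi>hat) s
                   \<and> policy_value P \<gamma> rt (det_policy \<pi>hat) s \<ge> Vstar s - \<epsilon>
                   \<and> Vstar s - \<epsilon> \<ge> policy_value P \<gamma> r' \<pi>' s - \<epsilon>)))"
proof -
  have g0: "0 \<le> \<gamma>" using \<gamma> by simp
  have g1: "0 < 1 - \<gamma>" using \<gamma> by simp
  define L where "L = (\<lambda>V. clip M (bellman P r \<gamma> V))"
  have compL: "clip M \<circ> bellman P r \<gamma> = L" by (simp add: L_def fun_eq_iff)
  define x where "x = (\<lambda>n. (L ^^ n) (\<lambda>_. 0))"
  have x0: "x 0 = (\<lambda>_. 0)" by (simp add: x_def)
  have xS: "\<And>n. x (Suc n) = L (x n)" by (simp add: x_def)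
  have VT: "VT = x T" using VT_def compL x_def by simp
  have Lpt: "\<bar>L V s - L W s\<bar> \<le> \<gamma> * sup_norm (V - W)" for V W s
  proof -
    have "\<bar>L V s - L W s\<bar> \<le> sup_norm (bellman P r \<gamma> V - bellman P r \<gamma> W)"
      unfolding L_def by (rule clip_diff)
    also have "\<dots> \<le> \<gamma> * sup_norm (V - W)" by (rule bellman_norm[OF P g0])
    finally show ?thesis .
  qed
  have contr: "sup_norm (L V - L W) \<le> \<gamma> * sup_norm (V - W)" for V W
    by (rule sup_norm_le) (simp add: Lpt)
  have Lmono: "L V s \<le> L W s" if "\<And>s. V s \<le> W s" for V W s
  proof -
    have "\<And>s. bellman P r \<gamma> V s \<le> bellman P r \<gamma> W s" using bellman_mono[OF P g0] that by blast
    then show ?thesis unfolding L_def by (rule clip_mono)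
  qed
  have Lshift: "L (\<lambda>s. V s + c) s = L V s + \<gamma> * c" for V c s
  proof -
    have "bellman P r \<gamma> (\<lambda>s. V s + c) = (\<lambda>s. bellman P r \<gamma> V s + \<gamma> * c)"
      by (simp add: fun_eq_iff bellman_shift[OF P])
    then show ?thesis unfolding L_def by (simp add: clip_shift)
  qed
  have b0: "0 \<le> bellman P r \<gamma> (\<lambda>_. 0) s \<and> bellman P r \<gamma> (\<lambda>_. 0) s \<le> 1" for s
  proof -
    obtain a where "bellman P r \<gamma> (\<lambda>_. 0) s = r s a + \<gamma> * Pv P s a (\<lambda>_. 0)" using bellman_ex by metis
    then show ?thesis using r_range by (simp add: Pv_zero)
  qed
  have L0: "0 \<le> L (\<lambda>_. 0) s \<and> L (\<lambda>_. 0) s \<le> 1" for s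
  proof -
    obtain t where t: "Min (range (bellman P r \<gamma> (\<lambda>_. 0))) = bellman P r \<gamma> (\<lambda>_. 0) t" using Min_ex by metis
    have e: "L (\<lambda>_. 0) s = min (bellman P r \<gamma> (\<lambda>_. 0) s) (M + bellman P r \<gamma> (\<lambda>_. 0) t)"
      unfolding L_def clip_def t ..
    have "min (bellman P r \<gamma> (\<lambda>_. 0) s) (M + bellman P r \<gamma> (\<lambda>_. 0) t) \<le> bellman P r \<gamma> (\<lambda>_. 0) s"
      by (rule min.cobounded1)
    moreover have "0 \<le> min (bellman P r \<gamma> (\<lambda>_. 0) s) (M + bellman P r \<gamma> (\<lambda>_. 0) t)"
      using b0[of s] b0[of t] M by simp
    ultimately show ?thesis using e b0[of s] by linarith
  qed
  have step: "sup_norm (x (Suc n) - x n) \<le> \<gamma> ^ n" for n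
  proof (induction n)
    case 0
    show ?case using L0 by (simp add: xS x0 sup_norm_0 sup_norm_le)
  next
    case (Suc n)
    have "sup_norm (x (Suc (Suc n)) - x (Suc n)) \<le> \<gamma> * sup_norm (x (Suc n) - x n)"
      unfolding xS[of "Suc n"] xS[of n] by (rule contr)
    also have "\<dots> \<le> \<gamma> * \<gamma> ^ n" using Suc g0 by (rule mult_left_mono)
    finally show ?case by (simp only: power_Suc)
  qed
  have steppt: "\<bar>x (Suc n) s - x n s\<bar> \<le> \<gamma> ^ n" for n s
    using sup_norm_pt[of "x (Suc n)" s "x n"] step[of n] by linarith
  have tele0: "(1 - \<gamma>) * \<bar>x (n + k) s - x n s\<bar> \<le> \<gamma> ^ n * (1 - \<gamma> ^ k)" for n k s
  proof (induction k)
    case 0 then show ?case by simp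
  next
    case (Suc k)
    have h1: "\<bar>x (n + Suc k) s - x n s\<bar> \<le> \<bar>x (Suc (n + k)) s - x (n + k) s\<bar> + \<bar>x (n + k) s - x n s\<bar>"
      by simp
    have "(1 - \<gamma>) * \<bar>x (n + Suc k) s - x n s\<bar> \<le> (1 - \<gamma>) * \<bar>x (Suc (n + k)) s - x (n + k) s\<bar> + (1 - \<gamma>) * \<bar>x (n + k) s - x n s\<bar>"
      using mult_left_mono[OF h1, of "1 - \<gamma>"] g1 by (simp add: distrib_left)
    also have "\<dots> \<le> (1 - \<gamma>) * \<gamma> ^ (n + k) + \<gamma> ^ n * (1 - \<gamma> ^ k)"
    proof -
      have "(1 - \<gamma>) * \<bar>x (Suc (n + k)) s - x (n + k) s\<bar> \<le> (1 - \<gamma>) * \<gamma> ^ (n + k)"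
        using steppt[of "n + k" s] g1 by (intro mult_left_mono) auto
      then show ?thesis using Suc by linarith
    qed
    also have "\<dots> = \<gamma> ^ n * (1 - \<gamma> ^ Suc k)" by (simp add: power_add algebra_simps)
    finally show ?case .
  qed
  have tele: "(1 - \<gamma>) * \<bar>x (n + k) s - x n s\<bar> \<le> \<gamma> ^ n" for n k s
  proof -
    have "\<gamma> ^ n * (1 - \<gamma> ^ k) \<le> \<gamma> ^ n" using g0 by (simp add: algebra_simps)
    then show ?thesis using tele0[of n k s] by linarith
  qed
  have cauchy: "Cauchy (\<lambda>n. x n s)" for s
  proof (rule CauchyI)
    fix e :: real assume e: "0 < e"
    have "(1 - \<gamma>) * e / 2 > 0" using e g1 by simp
    then obtain N where N: "\<gamma> ^ N < (1 - \<gamma>) * e / 2" using real_arch_pow_inv \<gamma> by blast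
    have "norm (x m s - x n s) < e" if "m \<ge> N" "n \<ge> N" for m n
    proof -
      obtain i where i: "m = N + i" using \<open>m \<ge> N\<close> le_Suc_ex by blast
      obtain j where j: "n = N + j" using \<open>n \<ge> N\<close> le_Suc_ex by blast
      have "\<bar>x m s - x n s\<bar> \<le> \<bar>x (N + i) s - x N s\<bar> + \<bar>x (N + j) s - x N s\<bar>" using i j by simp
      then have "(1 - \<gamma>) * \<bar>x m s - x n s\<bar> \<le> (1 - \<gamma>) * (\<bar>x (N + i) s - x N s\<bar> + \<bar>x (N + j) s - x N s\<bar>)"
        using g1 by (intro mult_left_mono) auto
      also have "\<dots> = (1 - \<gamma>) * \<bar>x (N + i) s - x N s\<bar> + (1 - \<gamma>) * \<bar>x (N + j) s - x N s\<bar>"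
        by (rule distrib_left)
      also have "\<dots> \<le> 2 * \<gamma> ^ N" using tele[of N i s] tele[of N j s] by simp
      also have "\<dots> < (1 - \<gamma>) * e" using N by simp
      finally show ?thesis using g1 by simp
    qed
    then show "\<exists>M. \<forall>m\<ge>M. \<forall>n\<ge>M. norm (x m s - x n s) < e" by blast
  qed
  define Vl where "Vl = (\<lambda>s. lim (\<lambda>n. x n s))"
  have conv: "(\<lambda>n. x n s) \<longlonglongrightarrow> Vl s" for s
    using cauchy[of s] unfolding Vl_def Cauchy_convergent_iff convergent_LIMSEQ_iff .
  have tail: "\<bar>Vl s - x n s\<bar> \<le> \<gamma> ^ n / (1 - \<gamma>)" for s n
  proof -
    have "(\<lambda>k. (1 - \<gamma>) * \<bar>x (k + n) s - x n s\<bar>) \<longlonglongrightarrow> (1 - \<gamma>) * \<bar>Vl s - x n s\<bar>"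
      by (intro tendsto_intros LIMSEQ_ignore_initial_segment conv)
    moreover have "\<exists>N. \<forall>k\<ge>N. (1 - \<gamma>) * \<bar>x (k + n) s - x n s\<bar> \<le> \<gamma> ^ n"
    proof -
      have "(1 - \<gamma>) * \<bar>x (k + n) s - x n s\<bar> \<le> \<gamma> ^ n" for k
        using tele[of n k s] by (simp add: add.commute)
      then show ?thesis by blast
    qed
    ultimately have "(1 - \<gamma>) * \<bar>Vl s - x n s\<bar> \<le> \<gamma> ^ n"
      by (rule LIMSEQ_le_const2)
    then show ?thesis using g1 by (simp add: pos_le_divide_eq mult.commute)
  qed
  have Vlfix: "L Vl = Vl"
  proof -
    have "\<bar>L Vl s - Vl s\<bar> \<le> 0" for s
    proof (rule le_by_pow[of \<gamma> "2 / (1 - \<gamma>)"])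
      fix n
      have sn: "sup_norm (Vl - x n) \<le> \<gamma> ^ n / (1 - \<gamma>)" by (rule sup_norm_le) (simp add: tail)
      have a: "\<bar>L Vl s - L (x n) s\<bar> \<le> \<gamma> ^ n / (1 - \<gamma>)"
      proof -
        have "\<gamma> * sup_norm (Vl - x n) \<le> sup_norm (Vl - x n)"
          using sup_norm_nonneg[of "Vl - x n"] \<gamma> by (intro mult_left_le_one_le) auto
        then show ?thesis using Lpt[of Vl s "x n"] sn by linarith
      qed
      have b: "\<bar>x (Suc n) s - Vl s\<bar> \<le> \<gamma> ^ n / (1 - \<gamma>)"
      proof -
        have "\<gamma> ^ Suc n \<le> \<gamma> ^ n" using \<gamma> by (intro power_decreasing) auto
        then have "\<gamma> ^ Suc n / (1 - \<gamma>) \<le> \<gamma> ^ n / (1 - \<gamma>)" using g1 by (simp add: divide_right_mono)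
        then show ?thesis using tail[of s "Suc n"] by (simp add: abs_minus_commute)
      qed
      have "\<bar>L Vl s - Vl s\<bar> \<le> \<bar>L Vl s - L (x n) s\<bar> + \<bar>x (Suc n) s - Vl s\<bar>" using xS[of n] by simp
      then show "\<bar>L Vl s - Vl s\<bar> \<le> 2 / (1 - \<gamma>) * \<gamma> ^ n" using a b by simp
    qed (use \<gamma> g1 in auto)
    then show ?thesis by (auto simp: fun_eq_iff)
  qed
  have uniq: "V = W" if "L V = V" "L W = W" for V W
  proof -
    have "sup_norm (V - W) \<le> \<gamma> * sup_norm (V - W)" using contr[of V W] that by simp
    then have "(1 - \<gamma>) * sup_norm (V - W) \<le> 0" by (simp add: algebra_simps)
    then have "sup_norm (V - W) \<le> 0" using g1 by (simp add: mult_le_0_iff)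
    then have "\<bar>V s - W s\<bar> \<le> 0" for s using sup_norm_pt[of V s W] by linarith
    then show ?thesis by (auto simp: fun_eq_iff)
  qed
  have part1: "\<forall>V W. sup_norm (clip M (bellman P r \<gamma> V) - clip M (bellman P r \<gamma> W)) \<le> \<gamma> * sup_norm (V - W)"
    using contr unfolding L_def by blast
  have part2: "\<exists>!V. clip M (bellman P r \<gamma> V) = V"
  proof (rule ex1I[of _ Vl])
    show "clip M (bellman P r \<gamma> Vl) = Vl" using Vlfix unfolding L_def .
  next
    fix V assume "clip M (bellman P r \<gamma> V) = V"
    then have "L V = V" unfolding L_def .
    then show "V = Vl" using uniq Vlfix by blast
  qed
  have gb: "\<gamma> ^ T \<le> (1 - \<gamma>)^2 * \<epsilon> / 3" by (rule gamma_pow_bound[OF \<gamma> \<epsilon> T_def])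
  have sq: "(1 - \<gamma>)^2 * \<epsilon> \<le> (1 - \<gamma>) * \<epsilon>"
  proof -
    have "(1 - \<gamma>) * (1 - \<gamma>) \<le> (1 - \<gamma>) * 1" using g1 \<gamma> by (intro mult_left_mono) auto
    then show ?thesis using \<epsilon> by (simp add: power2_eq_square mult_right_mono)
  qed
  have gb2: "3 * \<gamma> ^ T \<le> (1 - \<gamma>) * \<epsilon>" using gb sq by linarith
  have gpos: "0 \<le> \<gamma> ^ T" using g0 by simp
  have bT: "bellman P r \<gamma> VT s = r s (\<pi>hat s) + \<gamma> * Pv P s (\<pi>hat s) VT" for s
  proof -
    obtain a where "bellman P r \<gamma> VT s = r s a + \<gamma> * Pv P s a VT" using bellman_ex by metis
    moreover have "r s a + \<gamma> * Pv P s a VT \<le> r s (\<pi>hat s) + \<gamma> * Pv P s (\<pi>hat s) VT" using \<pi>hat by blast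
    ultimately show ?thesis using bellman_ge[of r s "\<pi>hat s" \<gamma> P VT] by linarith
  qed
  have rt_le: "\<forall>s a. rt s a \<le> r s a" unfolding rt_def by simp
  define W where "W = policy_value P \<gamma> rt (det_policy \<pi>hat)"
  have Weq: "W s = rt s (\<pi>hat s) + \<gamma> * Pv P s (\<pi>hat s) W" for s
    using PV_eq[OF P det_is_policy g0 \<gamma>(2), of rt \<pi>hat s]
    unfolding W_def[symmetric] det_sum[of \<pi>hat s "\<lambda>a. rt s a + \<gamma> * Pv P s a W"] .
  have FT: "rt s (\<pi>hat s) + \<gamma> * Pv P s (\<pi>hat s) VT = min (m + M) (bellman P r \<gamma> VT s)" for s
    unfolding bT rt_def by (simp add: min_def)
  have LVT: "L VT s = min (bellman P r \<gamma> VT s) (M + Min (range (bellman P r \<gamma> VT)))" for s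
    by (simp add: L_def clip_def)
  have mdiff: "\<bar>m - Min (range (bellman P r \<gamma> VT))\<bar> \<le> \<gamma> ^ T"
  proof (cases T)
    case 0
    then have v0: "VT = (\<lambda>_. 0)" using VT x0 by simp
    then have m0: "m = 0" using m_def by simp
    obtain t where t: "Min (range (bellman P r \<gamma> (\<lambda>_. 0))) = bellman P r \<gamma> (\<lambda>_. 0) t" using Min_ex by metis
    show ?thesis using v0 m0 t b0[of t] 0 by simp
  next
    case (Suc k)
    have vt: "VT = clip M (bellman P r \<gamma> (x k))" using VT Suc xS L_def by simp
    have "m = Min (range (bellman P r \<gamma> (x k)))" using m_def vt Min_clip[OF less_imp_le[OF M], of "bellman P r \<gamma> (x k)"] by simp
    then have "\<bar>m - Min (range (bellman P r \<gamma> VT))\<bar> \<le> sup_norm (bellman P r \<gamma> (x k) - bellman P r \<gamma> (x (Suc k)))"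
      using Min_diff VT Suc by simp
    also have "\<dots> \<le> \<gamma> * sup_norm (x k - x (Suc k))" by (rule bellman_norm[OF P g0])
    also have "\<dots> \<le> \<gamma> * \<gamma> ^ k" using step[of k] sup_norm_sym[of "x k" "x (Suc k)"] g0 by (simp add: mult_left_mono)
    finally show ?thesis using Suc by simp
  qed
  have FV: "\<bar>(rt s (\<pi>hat s) + \<gamma> * Pv P s (\<pi>hat s) VT) - VT s\<bar> \<le> 2 * \<gamma> ^ T" for s
  proof -
    have "\<bar>(rt s (\<pi>hat s) + \<gamma> * Pv P s (\<pi>hat s) VT) - L VT s\<bar> \<le> \<gamma> ^ T"
      unfolding FT LVT using min_lip[of "bellman P r \<gamma> VT s" "m + M" "M + Min (range (bellman P r \<gamma> VT))"] mdiff
      by (simp add: min.commute)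
    moreover have "\<bar>L VT s - VT s\<bar> \<le> \<gamma> ^ T" using steppt[of T s] VT xS by simp
    ultimately show ?thesis by linarith
  qed
  have DW: "(1 - \<gamma>) * sup_norm (W - VT) \<le> 2 * \<gamma> ^ T"
  proof -
    have "sup_norm (W - VT) \<le> \<gamma> * sup_norm (W - VT) + 2 * \<gamma> ^ T"
    proof (rule sup_norm_le)
      fix s
      have "\<bar>\<gamma> * Pv P s (\<pi>hat s) W - \<gamma> * Pv P s (\<pi>hat s) VT\<bar> \<le> \<gamma> * sup_norm (W - VT)"
      proof -
        have "\<gamma> * Pv P s (\<pi>hat s) W - \<gamma> * Pv P s (\<pi>hat s) VT = \<gamma> * (Pv P s (\<pi>hat s) W - Pv P s (\<pi>hat s) VT)"
          by (simp add: right_diff_distrib)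
        then have "\<bar>\<gamma> * Pv P s (\<pi>hat s) W - \<gamma> * Pv P s (\<pi>hat s) VT\<bar> = \<gamma> * \<bar>Pv P s (\<pi>hat s) W - Pv P s (\<pi>hat s) VT\<bar>"
          using g0 by (simp add: abs_mult)
        also have "\<dots> \<le> \<gamma> * sup_norm (W - VT)"
          using Pv_diff[OF P, of s "\<pi>hat s" W VT] g0 by (rule mult_left_mono)
        finally show ?thesis .
      qed
      then show "\<bar>(W - VT) s\<bar> \<le> \<gamma> * sup_norm (W - VT) + 2 * \<gamma> ^ T"
        using FV[of s] Weq[of s] by simp
    qed
    then show ?thesis by (simp add: algebra_simps)
  qed
  show ?thesis
  proof (rule conjI[OF part1], rule conjI[OF part2], rule allI, rule impI)
    fix Vs assume fs: "clip M (bellman P r \<gamma> Vs) = Vs"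
    then have LVs: "L Vs = Vs" by (simp add: L_def)
    have Snorm: "(1 - \<gamma>) * sup_norm Vs \<le> 1"
    proof -
      have "sup_norm Vs \<le> \<gamma> * sup_norm Vs + 1"
      proof (rule sup_norm_le)
        fix s
        have vs: "Vs s = (L Vs s - L (\<lambda>_. 0) s) + L (\<lambda>_. 0) s" using LVs by simp
        have "\<bar>Vs s\<bar> \<le> \<bar>L Vs s - L (\<lambda>_. 0) s\<bar> + \<bar>L (\<lambda>_. 0) s\<bar>"
          by (subst vs) (rule abs_triangle_ineq)
        then show "\<bar>Vs s\<bar> \<le> \<gamma> * sup_norm Vs + 1"
          using Lpt[of Vs s "\<lambda>_. 0"] L0[of s] sup_norm_0[of Vs] by simp
      qed
      then show ?thesis by (simp add: algebra_simps)
    qed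
    have E1: "sup_norm (x n - Vs) \<le> \<gamma> ^ n * sup_norm Vs" for n
    proof (induction n)
      case 0 show ?case by (simp only: x0 power_0 mult_1 sup_norm_0'[of Vs])
    next
      case (Suc n)
      have "sup_norm (x (Suc n) - Vs) = sup_norm (L (x n) - L Vs)" using LVs xS by simp
      also have "\<dots> \<le> \<gamma> * sup_norm (x n - Vs)" by (rule contr)
      also have "\<dots> \<le> \<gamma> * (\<gamma> ^ n * sup_norm Vs)" using Suc g0 by (rule mult_left_mono)
      finally show ?case by (simp only: power_Suc mult.assoc)
    qed
    have ET: "(1 - \<gamma>) * sup_norm (VT - Vs) \<le> \<gamma> ^ T"
    proof -
      have "(1 - \<gamma>) * sup_norm (VT - Vs) \<le> (1 - \<gamma>) * (\<gamma> ^ T * sup_norm Vs)"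
        unfolding VT by (rule mult_left_mono[OF E1[of T]]) (use g1 in simp)
      also have "\<dots> = \<gamma> ^ T * ((1 - \<gamma>) * sup_norm Vs)" by simp
      also have "\<dots> \<le> \<gamma> ^ T * 1" using Snorm g0 by (intro mult_left_mono) auto
      finally show ?thesis by simp
    qed
    have p1: "sup_norm (VT - Vs) \<le> \<epsilon>"
    proof -
      have "(1 - \<gamma>) * sup_norm (VT - Vs) \<le> (1 - \<gamma>) * \<epsilon>" using ET gb2 gpos by linarith
      then show ?thesis by (rule mult_left_le_imp_le[OF _ g1])
    qed
    have WV: "sup_norm (W - Vs) \<le> \<epsilon>"
    proof -
      have "(1 - \<gamma>) * sup_norm (W - Vs) \<le> (1 - \<gamma>) * (sup_norm (W - VT) + sup_norm (VT - Vs))"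
        by (rule mult_left_mono[OF sup_norm_tri[of W Vs VT]]) (use g1 in simp)
      also have "\<dots> \<le> 3 * \<gamma> ^ T" using DW ET by (simp add: distrib_left)
      also have "\<dots> \<le> (1 - \<gamma>) * \<epsilon>" using gb2 by simp
      finally show ?thesis by (rule mult_left_le_imp_le[OF _ g1])
    qed
    then have p3: "sup_norm (policy_value P \<gamma> rt (det_policy \<pi>hat) - Vs) \<le> \<epsilon>" by (simp add: W_def)
    have WVpt: "\<bar>W s - Vs s\<bar> \<le> \<epsilon>" for s using sup_norm_pt[of W s Vs] WV by linarith
    have MaxVs: "Max (range Vs) \<le> M + Min (range Vs)"
    proof -
      obtain s where s: "Max (range Vs) = Vs s" using Max_ex by metis
      have "Vs s \<le> M + Min (range (bellman P r \<gamma> Vs))" using clip_le[of M "bellman P r \<gamma> Vs" s] fs by simp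
      also have "Min (range (bellman P r \<gamma> Vs)) = Min (range Vs)"
        using Min_clip[OF less_imp_le[OF M], of "bellman P r \<gamma> Vs"] fs by simp
      finally show ?thesis using s by simp
    qed
    have MaxW: "Max (range W) \<le> Max (range Vs) + \<epsilon>"
    proof -
      obtain s where s: "Max (range W) = W s" using Max_ex by metis
      show ?thesis using s WVpt[of s] Max_ge'[of Vs s] by linarith
    qed
    have MinW: "Min (range Vs) - \<epsilon> \<le> Min (range W)"
    proof -
      obtain s where s: "Min (range W) = W s" using Min_ex by metis
      show ?thesis using s WVpt[of s] Min_le'[of Vs s] by linarith
    qed
    have p4: "sp_norm (policy_value P \<gamma> rt (det_policy \<pi>hat)) \<le> M + 2 * \<epsilon>"
      using MaxVs MaxW MinW unfolding W_def[symmetric] sp_norm_def by linarith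
    have p5: "\<forall>\<pi>' r'. is_policy \<pi>' \<longrightarrow> (\<forall>s a. r' s a \<le> r s a)
                \<longrightarrow> sp_norm (policy_value P \<gamma> r' \<pi>') \<le> M \<longrightarrow>
                (\<forall>s. Vs s \<ge> policy_value P \<gamma> r' \<pi>' s
                   \<and> policy_value P \<gamma> r (det_policy \<pi>hat) s \<ge> policy_value P \<gamma> rt (det_policy \<pi>hat) s
                   \<and> policy_value P \<gamma> rt (det_policy \<pi>hat) s \<ge> Vs s - \<epsilon>
                   \<and> Vs s - \<epsilon> \<ge> policy_value P \<gamma> r' \<pi>' s - \<epsilon>)"
    proof (intro allI impI)
      fix \<pi>' r' s
      assume pol: "is_policy \<pi>'" and le: "\<forall>s a. r' s a \<le> r s a"
        and sp: "sp_norm (policy_value P \<gamma> r' \<pi>') \<le> M"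
      define V' where "V' = policy_value P \<gamma> r' \<pi>'"
      have V'eq: "V' s = (\<Sum>a\<in>UNIV. \<pi>' s a * (r' s a + \<gamma> * Pv P s a V'))" for s
        unfolding V'_def by (rule PV_eq[OF P pol g0 \<gamma>(2)])
      have V'B: "V' s \<le> bellman P r \<gamma> V' s" for s
      proof -
        have "\<pi>' s a * (r' s a + \<gamma> * Pv P s a V') \<le> \<pi>' s a * bellman P r \<gamma> V' s" for a
        proof -
          have "r' s a + \<gamma> * Pv P s a V' \<le> bellman P r \<gamma> V' s"
            using le[rule_format, of s a] bellman_ge[of r s a \<gamma> P V'] by linarith
          then show ?thesis using pol by (simp add: is_policy_def mult_left_mono)
        qed
        then have "V' s \<le> (\<Sum>a\<in>UNIV. \<pi>' s a * bellman P r \<gamma> V' s)" unfolding V'eq[of s] by (rule sum_mono)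
        also have "\<dots> = bellman P r \<gamma> V' s" using pol by (simp add: is_policy_def sum_distrib_right[symmetric])
        finally show ?thesis .
      qed
      have cV': "clip M V' = V'"
      proof (rule clip_id)
        fix s
        show "V' s \<le> M + Min (range V')" using Max_ge'[of V' s] sp unfolding V'_def[symmetric] sp_norm_def by linarith
      qed
      have V'L: "V' s \<le> L V' s" for s
      proof -
        have "clip M V' s \<le> clip M (bellman P r \<gamma> V') s" by (rule clip_mono) (rule V'B)
        then show ?thesis using cV' by (simp add: L_def)
      qed
      define d where "d = Max (range (\<lambda>s. V' s - Vs s))"
      obtain s0 where s0: "d = V' s0 - Vs s0" using Max_ex[of "\<lambda>s. V' s - Vs s"] d_def by metis
      have dle: "V' s \<le> Vs s + d" for s using Max_ge'[of "\<lambda>s. V' s - Vs s" s] unfolding d_def by linarith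
      have "L V' s0 \<le> L (\<lambda>s. Vs s + d) s0" by (rule Lmono) (rule dle)
      then have "V' s0 \<le> L (\<lambda>s. Vs s + d) s0" using V'L[of s0] by linarith
      also have "\<dots> = Vs s0 + \<gamma> * d" using Lshift LVs by simp
      finally have "d \<le> \<gamma> * d" using s0 by simp
      then have "(1 - \<gamma>) * d \<le> 0" by (simp add: algebra_simps)
      then have "d \<le> 0" using g1 by (simp add: mult_le_0_iff)
      then have c1: "policy_value P \<gamma> r' \<pi>' s \<le> Vs s" using dle[of s] V'_def by simp
      have c2: "policy_value P \<gamma> rt (det_policy \<pi>hat) s \<le> policy_value P \<gamma> r (det_policy \<pi>hat) s"
        by (rule PV_mono[OF P det_is_policy g0 \<gamma>(2) rt_le])
      have c3: "Vs s - \<epsilon> \<le> policy_value P \<gamma> rt (det_policy \<pi>hat) s"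
        using WVpt[of s] W_def by simp
      show "Vs s \<ge> policy_value P \<gamma> r' \<pi>' s
                   \<and> policy_value P \<gamma> r (det_policy \<pi>hat) s \<ge> policy_value P \<gamma> rt (det_policy \<pi>hat) s
                   \<and> policy_value P \<gamma> rt (det_policy \<pi>hat) s \<ge> Vs s - \<epsilon>
                   \<and> Vs s - \<epsilon> \<ge> policy_value P \<gamma> r' \<pi>' s - \<epsilon>"
        using c1 c2 c3 by simp
    qed
    show "sup_norm (VT - Vs) \<le> \<epsilon>
          \<and> (\<forall>s a. rt s a \<le> r s a)
          \<and> sup_norm (policy_value P \<gamma> rt (det_policy \<pi>hat) - Vs) \<le> \<epsilon>
          \<and> sp_norm (policy_value P \<gamma> rt (det_policy \<pi>hat)) \<le> M + 2 * \<epsilon>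
          \<and> (\<forall>\<pi>' r'. is_policy \<pi>' \<longrightarrow> (\<forall>s a. r' s a \<le> r s a)
                \<longrightarrow> sp_norm (policy_value P \<gamma> r' \<pi>') \<le> M \<longrightarrow>
                (\<forall>s. Vs s \<ge> policy_value P \<gamma> r' \<pi>' s
                   \<and> policy_value P \<gamma> r (det_policy \<pi>hat) s \<ge> policy_value P \<gamma> rt (det_policy \<pi>hat) s
                   \<and> policy_value P \<gamma> rt (det_policy \<pi>hat) s \<ge> Vs s - \<epsilon>
                   \<and> Vs s - \<epsilon> \<ge> policy_value P \<gamma> r' \<pi>' s - \<epsilon>))"
      by (intro conjI p1 rt_le p3 p4 p5)
  qed
qed

end
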